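(* Let $\alpha>0>\beta$ with $|\beta|<\alpha$, and put $\delta=\left(\frac{\alpha-\beta}{\alpha+\beta}\right)^2$ (so $\delta>1$) and $K=\frac{2\alpha}{(\alpha+\beta)^2}>0$. Let $\omega>0$, $\gamma>0$, $k_1>0$ with $k_1\neq 1$, and put $M=\delta^{\frac{1}{1-\delta}}-\delta^{\frac{\delta}{1-\delta}}$. For $T\ge 0$ define, for $s\in\mathbb{R}$ and $y>0$, $$\mathcal{G}_T(s,y)=\left(s-\frac{\ln y}{K}-T,\; y^{\delta}+\gamma\bigl(1+k_1\sin(2\omega s)\bigr)\right),$$ and consider the fixed points $(s,y)$ of $\mathcal{G}_T$ (i.e. $\mathcal{G}_T(s,y)=(s,y)$), where $s$ is taken modulo $\pi/\omega$. Then the curves $k_1=1$, $\gamma(1-k_1)=M$ and $\gamma(1+k_1)=M$ separate the first quadrant of the $(k_1,\gamma)$-plane into five regions with the following behaviour: (1) if $k_1\in(0,1)$ and $M<\gamma(1-k_1)$, then $\mathcal{G}_T$ has no fixed points for any $T$; (2) if $k_1\in(0,1)$ and $\gamma(1-k_1)<M<\gamma(1+k_1)$, then there are fixed points for each $T\in[T_1,T_2]$; (3) if $k_1\in(0,1)$ and $\gamma(1+k_1)<M$, then there are fixed points for each $T\in[T_1,T_2]\cup[T_3,T_4]$; (4) if $k_1>1$ and $M<\gamma(1+k_1)$, then there are fixed points for each $T\in(0,\infty)$; (5) if $k_1>1$ and $\gamma(1+k_1)<M$, then there are fixed points for each $T\in(0,T_1]\cup[T_2,\infty)$; where $0<T_1<T_2<T_3<T_4$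 are real numbers (depending on the parameters). Moreover, when fixed points exist for $T$ in an interval, there are exactly two fixed points (with $s$ modulo $\pi/\omega$) for each $T$ in the interior of the interval and only one for $T$ in the boundary of the interval. These qualitative features occur for every $\omega>0$: the sets of values of $T$ above and the $y$-coordinates of the fixed points do not depend on $\omega$, and only the coordinate $s$ of the fixed points depends on $\omega$.
   Context: The map $\mathcal{G}_T$ is obtained from an approximate first return map $G(s,y)$ of a periodically forced system by subtracting the auxiliary return time $T$ from the first coordinate; $\mathcal{G}_T$ commutes with the translation $s\mapsto s+\pi/\omega$, which is why fixed points are counted with $s$ modulo $\pi/\omega$. *)

theory Defs
  imports Complex_Main
begin

definition delta :: "real \<Rightarrow> real \<Rightarrow> real" where
  "delta \<alpha> \<beta> = ((\<alpha> - \<beta>) / (\<alpha> + \<beta>))^2"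

definition Kc :: "real \<Rightarrow> real \<Rightarrow> real" where
  "Kc \<alpha> \<beta> = 2 * \<alpha> / (\<alpha> + \<beta>)^2"

definition Mc :: "real \<Rightarrow> real \<Rightarrow> real" where
  "Mc \<alpha> \<beta> = delta \<alpha> \<beta> powr (1 / (1 - delta \<alpha> \<beta>))
              - delta \<alpha> \<beta> powr (delta \<alpha> \<beta> / (1 - delta \<alpha> \<beta>))"

definition GT :: "real \<Rightarrow> real \<Rightarrow> real \<Rightarrow> real \<Rightarrow> real \<Rightarrow> real \<Rightarrow> real \<times> real \<Rightarrow> real \<times> real" where
  "GT \<alpha> \<beta> \<gamma> k1 \<omega> T p = (case p of (s, y) \<Rightarrow>
     (s - ln y / Kc \<alpha> \<beta> - T, y powr delta \<alpha> \<beta> + \<gamma> * (1 + k1 * sin (2 * \<omega> * s))))"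

definition fixpts :: "real \<Rightarrow> real \<Rightarrow> real \<Rightarrow> real \<Rightarrow> real \<Rightarrow> real \<Rightarrow> (real \<times> real) set" where
  "fixpts \<alpha> \<beta> \<gamma> k1 \<omega> T = {(s, y). 0 < y \<and> GT \<alpha> \<beta> \<gamma> k1 \<omega> T (s, y) = (s, y)}"

text \<open>Number of fixed points counted with s modulo pi/omega
  (one representative s in [0, pi/omega) per class).\<close>
definition nfix :: "real \<Rightarrow> real \<Rightarrow> real \<Rightarrow> real \<Rightarrow> real \<Rightarrow> real \<Rightarrow> nat" where
  "nfix \<alpha> \<beta> \<gamma> k1 \<omega> T = card {p \<in> fixpts \<alpha> \<beta> \<gamma> k1 \<omega> T. 0 \<le> fst p \<and> fst p < pi / \<omega>}"

end

theory Submission imports Defs begin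


lemma sin_count:
  fixes c :: real
  assumes c: "\<bar>c\<bar> \<le> 1"
  shows "card {x. 0 \<le> x \<and> x < 2*pi \<and> sin x = c} = (if \<bar>c\<bar> = 1 then 1 else 2)"
proof -
  define a where "a = arcsin c"
  have ab: "-(pi/2) \<le> a" "a \<le> pi/2" using arcsin_bounded[of c] c by (auto simp: a_def)
  have sa: "sin a = c" using c by (simp add: a_def)
  define r1 where "r1 = (if a \<ge> 0 then a else a + 2*pi)"
  define r2 where "r2 = pi - a"
  have S: "{x. 0 \<le> x \<and> x < 2*pi \<and> sin x = c} = {r1, r2}"
  proof (rule set_eqI, rule iffI)
    fix x assume "x \<in> {x. 0 \<le> x \<and> x < 2*pi \<and> sin x = c}"
    hence x: "0 \<le> x" "x < 2*pi" "sin x = sin a" using sa by auto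
    have "sin x - sin a = 0" using x by simp
    hence "sin ((x - a)/2) = 0 \<or> cos ((x + a)/2) = 0" unfolding sin_diff_sin by simp
    thus "x \<in> {r1, r2}"
    proof
      assume "sin ((x - a)/2) = 0"
      then obtain i :: int where i: "(x - a)/2 = i * pi" by (auto simp: sin_zero_iff_int2)
      hence xi: "x = a + 2 * i * pi" by simp
      have e1: "(2 * real_of_int i + 1/2) * pi = 2 * i * pi + 1/2 * pi"
        and e2: "(5/2 - 2 * real_of_int i) * pi = 5/2 * pi - 2 * i * pi" by (simp_all add: algebra_simps)
      have "0 \<le> (2 * real_of_int i + 1/2) * pi" "0 < (5/2 - 2 * real_of_int i) * pi"
        unfolding e1 e2 using xi x ab by linarith+
      hence "0 \<le> 2 * real_of_int i + 1/2" "0 < 5/2 - 2 * real_of_int i" using pi_gt_zero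
        by (simp_all add: zero_le_mult_iff zero_less_mult_iff)
      hence "-1 < real_of_int i" "real_of_int i < 2" by linarith+
      hence "-1 < i" "i < 2" by linarith+
      hence "i = 0 \<or> i = 1" by linarith
      thus ?thesis using xi x ab unfolding r1_def by auto
    next
      assume "cos ((x + a)/2) = 0"
      then obtain i :: int where i: "(x + a)/2 = i * pi + pi/2" by (auto simp: cos_zero_iff_int2)
      hence xi: "x = pi - a + 2 * i * pi" by simp
      have e1: "(2 * real_of_int i + 3/2) * pi = 2 * i * pi + 3/2 * pi"
        and e2: "(3/2 - 2 * real_of_int i) * pi = 3/2 * pi - 2 * i * pi" by (simp_all add: algebra_simps)
      have "0 \<le> (2 * real_of_int i + 3/2) * pi" "0 < (3/2 - 2 * real_of_int i) * pi"
        unfolding e1 e2 using xi x ab by linarith+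
      hence "0 \<le> 2 * real_of_int i + 3/2" "0 < 3/2 - 2 * real_of_int i" using pi_gt_zero
        by (simp_all add: zero_le_mult_iff zero_less_mult_iff)
      hence "-1 < real_of_int i" "real_of_int i < 1" by linarith+
      hence "-1 < i" "i < 1" by linarith+
      hence "i = 0" by linarith
      thus ?thesis using xi unfolding r2_def by auto
    qed
  next
    fix x assume "x \<in> {r1, r2}"
    moreover have "sin r1 = c" using sa by (simp add: r1_def)
    moreover have "sin r2 = c" using sa by (simp add: r2_def)
    ultimately show "x \<in> {x. 0 \<le> x \<and> x < 2*pi \<and> sin x = c}"
      using ab unfolding r1_def r2_def apply (auto split: if_splits)
      using pi_gt_zero by linarith+
  qed
  have "r1 = r2 \<longleftrightarrow> \<bar>c\<bar> = 1"
  proof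
    assume "r1 = r2"
    hence "a = pi/2 \<or> a = -(pi/2)" unfolding r1_def r2_def by (auto split: if_splits)
    thus "\<bar>c\<bar> = 1" using sa by (metis abs_1 abs_minus_cancel sin_pi_half sin_minus)
  next
    assume "\<bar>c\<bar> = 1"
    hence "c = 1 \<or> c = -1" by auto
    hence "a = pi/2 \<or> a = -(pi/2)" by (auto simp: a_def)
    thus "r1 = r2" unfolding r1_def r2_def apply auto using pi_gt_zero by linarith+
  qed
  thus ?thesis unfolding S by auto
qed

lemma sin_count_s:
  fixes c \<omega> :: real
  assumes c: "\<bar>c\<bar> \<le> 1" and w: "\<omega> > 0"
  shows "card {s. 0 \<le> s \<and> s < pi/\<omega> \<and> sin (2*\<omega>*s) = c} = (if \<bar>c\<bar> = 1 then 1 else 2)"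
proof -
  have "{s. 0 \<le> s \<and> s < pi/\<omega> \<and> sin (2*\<omega>*s) = c} = (\<lambda>x. x/(2*\<omega>)) ` {x. 0 \<le> x \<and> x < 2*pi \<and> sin x = c}"
  proof (rule set_eqI, rule iffI)
    fix s assume "s \<in> {s. 0 \<le> s \<and> s < pi/\<omega> \<and> sin (2*\<omega>*s) = c}"
    hence s: "0 \<le> s" "s < pi/\<omega>" "sin (2*\<omega>*s) = c" by auto
    have "2*\<omega>*s < 2*pi" using s(2) w by (simp add: field_simps)
    moreover have "s = (2*\<omega>*s)/(2*\<omega>)" using w by simp
    ultimately show "s \<in> (\<lambda>x. x/(2*\<omega>)) ` {x. 0 \<le> x \<and> x < 2*pi \<and> sin x = c}"
      using s w by (intro image_eqI[of _ _ "2*\<omega>*s"]) auto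
  next
    fix s assume "s \<in> (\<lambda>x. x/(2*\<omega>)) ` {x. 0 \<le> x \<and> x < 2*pi \<and> sin x = c}"
    then obtain x where x: "0 \<le> x" "x < 2*pi" "sin x = c" "s = x/(2*\<omega>)" by auto
    thus "s \<in> {s. 0 \<le> s \<and> s < pi/\<omega> \<and> sin (2*\<omega>*s) = c}" using w
      by (auto simp: field_simps zero_le_mult_iff)
  qed
  moreover have "inj_on (\<lambda>x. x/(2*\<omega>)) A" for A using w by (auto simp: inj_on_def)
  ultimately show ?thesis using sin_count[OF c] by (simp add: card_image)
qed



lemma level:
  fixes g :: "real \<Rightarrow> real"
  assumes cont: "continuous_on UNIV g" and g0: "g 0 = 0" and Ts: "Ts > 0"
    and inc: "\<And>x y. 0 \<le> x \<Longrightarrow> x < y \<Longrightarrow> y \<le> Ts \<Longrightarrow> g x < g y"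
    and dec: "\<And>x y. Ts \<le> x \<Longrightarrow> x < y \<Longrightarrow> g y < g x"
    and ev: "\<And>L. L > 0 \<Longrightarrow> \<exists>T\<ge>Ts. g T < L"
    and L: "0 < L" "L < g Ts"
  shows "\<exists>a b. 0 < a \<and> a < Ts \<and> Ts < b \<and>
     (\<forall>T\<ge>0. (L \<le> g T \<longleftrightarrow> a \<le> T \<and> T \<le> b) \<and> (L < g T \<longleftrightarrow> a < T \<and> T < b))"
proof -
  obtain a where a: "0 \<le> a" "a \<le> Ts" "g a = L"
    using IVT'[of g 0 L Ts] L g0 Ts continuous_on_subset[OF cont] by force
  obtain T' where T': "T' \<ge> Ts" "g T' < L" using ev L by blast
  obtain b where b: "Ts \<le> b" "b \<le> T'" "g b = L"
    using IVT2'[of g T' L Ts] L T' continuous_on_subset[OF cont] by force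
  have a0: "0 < a" using a g0 L by (cases "a = 0") auto
  have aT: "a < Ts" using a L by (cases "a = Ts") auto
  have bT: "Ts < b" using b L by (cases "b = Ts") auto
  have "(L \<le> g T \<longleftrightarrow> a \<le> T \<and> T \<le> b) \<and> (L < g T \<longleftrightarrow> a < T \<and> T < b)" if T: "T \<ge> 0" for T
  proof (cases "T \<le> Ts")
    case True
    have "T < a \<Longrightarrow> g T < L" using inc[of T a] a T by auto
    moreover have "a < T \<Longrightarrow> g T > L" using inc[of a T] a True by auto
    ultimately show ?thesis using a True bT by (cases T a rule: linorder_cases) auto
  next
    case False
    have "T < b \<Longrightarrow> g T > L" using dec[of T b] b False by auto
    moreover have "b < T \<Longrightarrow> g T < L" using dec[of b T] b by auto
    ultimately show ?thesis using b False aT by (cases T b rule: linorder_cases) auto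
  qed
  thus ?thesis using a0 aT bT by blast
qed

definition gg :: "real \<Rightarrow> real \<Rightarrow> real \<Rightarrow> real" where
  "gg K d T = exp (-(K*T)) - exp (-(d*K*T))"

lemma gg_props:
  assumes K: "K > 0" and d: "d > 1"
  defines "Ts \<equiv> ln d / ((d - 1) * K)"
  shows "continuous_on UNIV (gg K d)" "gg K d 0 = 0" "Ts > 0"
    "\<And>x y. 0 \<le> x \<Longrightarrow> x < y \<Longrightarrow> y \<le> Ts \<Longrightarrow> gg K d x < gg K d y"
    "\<And>x y. Ts \<le> x \<Longrightarrow> x < y \<Longrightarrow> gg K d y < gg K d x"
    "\<And>L. L > 0 \<Longrightarrow> \<exists>T\<ge>Ts. gg K d T < L"
    "\<And>T. T > 0 \<Longrightarrow> gg K d T > 0"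
    "gg K d Ts = d powr (1 / (1 - d)) - d powr (d / (1 - d))"
    "\<And>T. gg K d T \<le> gg K d Ts"
proof -
  show cont: "continuous_on UNIV (gg K d)" unfolding gg_def by (intro continuous_intros)
  show "gg K d 0 = 0" by (simp add: gg_def)
  have lnd: "ln d > 0" using d by simp
  show Tsp: "Ts > 0" unfolding Ts_def using lnd d K by simp
  have der: "((gg K d) has_real_derivative (-K * exp (-(K*T)) + d*K*exp (-(d*K*T)))) (at T)" for T
    unfolding gg_def by (auto intro!: derivative_eq_intros simp: algebra_simps)
  have sgn: "(-K * exp (-(K*T)) + d*K*exp (-(d*K*T))) > 0 \<longleftrightarrow> T < Ts" for T
  proof -
    have "(-K * exp (-(K*T)) + d*K*exp (-(d*K*T))) > 0 \<longleftrightarrow> exp (-(K*T)) < d*exp (-(d*K*T))"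
      using K by (simp add: algebra_simps)
    also have "d*exp (-(d*K*T)) = exp (ln d - d*K*T)" using d by (simp add: exp_diff exp_minus divide_inverse)
    also have "exp (-(K*T)) < exp (ln d - d*K*T) \<longleftrightarrow> (d - 1) * K * T < ln d"
      by (simp add: algebra_simps)
    also have "\<dots> \<longleftrightarrow> T < Ts" unfolding Ts_def using d K
      by (simp add: pos_less_divide_eq mult.commute)
    finally show ?thesis .
  qed
  have sgn2: "(-K * exp (-(K*T)) + d*K*exp (-(d*K*T))) < 0 \<longleftrightarrow> T > Ts" for T
  proof -
    have "(-K * exp (-(K*T)) + d*K*exp (-(d*K*T))) < 0 \<longleftrightarrow> exp (-(K*T)) > d*exp (-(d*K*T))"
      using K by (simp add: algebra_simps)
    also have "d*exp (-(d*K*T)) = exp (ln d - d*K*T)" using d by (simp add: exp_diff exp_minus divide_inverse)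
    also have "exp (-(K*T)) > exp (ln d - d*K*T) \<longleftrightarrow> (d - 1) * K * T > ln d"
      by (simp add: algebra_simps)
    also have "\<dots> \<longleftrightarrow> T > Ts" unfolding Ts_def using d K
      by (simp add: pos_divide_less_eq mult.commute)
    finally show ?thesis .
  qed
  show inc: "gg K d x < gg K d y" if "0 \<le> x" "x < y" "y \<le> Ts" for x y
  proof (rule DERIV_pos_imp_increasing_open[OF \<open>x < y\<close>])
    fix z assume "x < z" "z < y"
    hence "z < Ts" using that by linarith
    thus "\<exists>D. (gg K d has_real_derivative D) (at z) \<and> D > 0" using der[of z] sgn[of z] by blast
  qed (rule continuous_on_subset[OF cont], simp)
  show dec: "gg K d y < gg K d x" if "Ts \<le> x" "x < y" for x y
  proof (rule DERIV_neg_imp_decreasing_open[OF \<open>x < y\<close>])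
    fix z assume "x < z" "z < y"
    hence "z > Ts" using that by linarith
    thus "\<exists>D. (gg K d has_real_derivative D) (at z) \<and> D < 0" using der[of z] sgn2[of z] by blast
  qed (rule continuous_on_subset[OF cont], simp)
  show "\<exists>T\<ge>Ts. gg K d T < L" if L: "L > 0" for L
  proof (intro exI conjI)
    define T where "T = Ts + \<bar>ln L\<bar> / K + 1"
    show "T \<ge> Ts" unfolding T_def using K by simp
    have "gg K d T < exp (-(K*T))" unfolding gg_def by simp
    also have "-(K*T) < ln L" unfolding T_def using K by (simp add: algebra_simps) (smt (verit) Tsp K mult_pos_pos)
    hence "exp (-(K*T)) < L" using L by (metis exp_less_cancel_iff exp_ln)
    finally show "gg K d T < L" .
  qed
  show "gg K d T > 0" if "T > 0" for T
    unfolding gg_def using that K d by (simp add: mult_strict_right_mono)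
  show "gg K d Ts = d powr (1 / (1 - d)) - d powr (d / (1 - d))"
  proof -
    have "-(K*Ts) = 1/(1-d) * ln d" unfolding Ts_def using K d by (simp add: field_simps)
    moreover have "-(d*K*Ts) = d/(1-d) * ln d" unfolding Ts_def using K d by (simp add: field_simps)
    ultimately show ?thesis unfolding gg_def powr_def using d by simp
  qed
  show "gg K d T \<le> gg K d Ts" for T
  proof (cases "T < 0")
    case True
    have "gg K d T \<le> 0" unfolding gg_def using True K d
      by (simp add: mult_less_0_iff)
    moreover have "gg K d Ts > 0" using \<open>Ts > 0\<close> K d unfolding gg_def by (simp add: mult_strict_right_mono)
    ultimately show ?thesis by simp
  next
    case False
    then show ?thesis using inc[of T Ts] dec[of Ts T] by (cases T Ts rule: linorder_cases) auto
  qed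
qed



lemma fix_char:
  assumes K: "Kc \<alpha> \<beta> > 0" and g: "\<gamma> > 0" and k: "k1 > 0"
  shows "(s,y) \<in> fixpts \<alpha> \<beta> \<gamma> k1 \<omega> T \<longleftrightarrow> y = exp (-(Kc \<alpha> \<beta> * T)) \<and>
     sin (2*\<omega>*s) = (gg (Kc \<alpha> \<beta>) (delta \<alpha> \<beta>) T - \<gamma>) / (\<gamma> * k1)"
proof -
  define K where "K = Kc \<alpha> \<beta>"
  define d where "d = delta \<alpha> \<beta>"
  have K0: "K > 0" using K by (simp add: K_def)
  have gk: "\<gamma> * k1 > 0" using g k by simp
  have e: "\<gamma> * (1 + k1 * x) = G \<longleftrightarrow> x = (G - \<gamma>) / (\<gamma> * k1)" for x G
  proof -
    have "\<gamma> * (1 + k1 * x) = G \<longleftrightarrow> (\<gamma>*k1)*x = G - \<gamma>" by (auto simp: algebra_simps)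
    also have "\<dots> \<longleftrightarrow> x = (G - \<gamma>) / (\<gamma> * k1)" using gk g k by (simp add: eq_divide_eq ac_simps)
    finally show ?thesis .
  qed
  have "(s,y) \<in> fixpts \<alpha> \<beta> \<gamma> k1 \<omega> T \<longleftrightarrow>
     0 < y \<and> ln y / K + T = 0 \<and> \<gamma> * (1 + k1 * sin (2*\<omega>*s)) = y - y powr d"
    unfolding fixpts_def GT_def K_def d_def by auto
  also have "\<dots> \<longleftrightarrow> y = exp (-(K*T)) \<and> \<gamma> * (1 + k1 * sin (2*\<omega>*s)) = gg K d T"
  proof
    assume h: "0 < y \<and> ln y / K + T = 0 \<and> \<gamma> * (1 + k1 * sin (2*\<omega>*s)) = y - y powr d"
    hence "ln y = -(K*T)" using K0 by (simp add: field_simps)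
    hence y: "y = exp (-(K*T))" using h by (metis exp_ln)
    have "y powr d = exp (-(d*K*T))" unfolding y powr_def by simp
    thus "y = exp (-(K*T)) \<and> \<gamma> * (1 + k1 * sin (2*\<omega>*s)) = gg K d T"
      using h y unfolding gg_def by simp
  next
    assume h: "y = exp (-(K*T)) \<and> \<gamma> * (1 + k1 * sin (2*\<omega>*s)) = gg K d T"
    have "y powr d = exp (-(d*K*T))" using h unfolding powr_def by simp
    thus "0 < y \<and> ln y / K + T = 0 \<and> \<gamma> * (1 + k1 * sin (2*\<omega>*s)) = y - y powr d"
      using h K0 unfolding gg_def by simp
  qed
  finally show ?thesis using e unfolding K_def d_def by simp
qed

lemma fix_facts:
  fixes T :: real
  assumes K: "Kc \<alpha> \<beta> > 0" and g: "\<gamma> > 0" and k: "k1 > 0" and w: "\<omega> > 0"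
  defines "G \<equiv> gg (Kc \<alpha> \<beta>) (delta \<alpha> \<beta>) T"
  shows "fixpts \<alpha> \<beta> \<gamma> k1 \<omega> T \<noteq> {} \<longleftrightarrow> \<gamma>*(1-k1) \<le> G \<and> G \<le> \<gamma>*(1+k1)"
    and "\<gamma>*(1-k1) < G \<Longrightarrow> G < \<gamma>*(1+k1) \<Longrightarrow> nfix \<alpha> \<beta> \<gamma> k1 \<omega> T = 2"
    and "G = \<gamma>*(1-k1) \<or> G = \<gamma>*(1+k1) \<Longrightarrow> nfix \<alpha> \<beta> \<gamma> k1 \<omega> T = 1"
    and "snd ` fixpts \<alpha> \<beta> \<gamma> k1 \<omega> T =
           (if \<gamma>*(1-k1) \<le> G \<and> G \<le> \<gamma>*(1+k1) then {exp (-(Kc \<alpha> \<beta> * T))} else {})"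
proof -
  define c where "c = (G - \<gamma>) / (\<gamma> * k1)"
  define y0 where "y0 = exp (-(Kc \<alpha> \<beta> * T))"
  have gk: "\<gamma> * k1 > 0" using g k by simp
  have F: "fixpts \<alpha> \<beta> \<gamma> k1 \<omega> T = (\<lambda>s. (s, y0)) ` {s. sin (2*\<omega>*s) = c}"
    using fix_char[OF K g k] unfolding c_def y0_def G_def by auto
  have c1: "\<bar>c\<bar> \<le> 1 \<longleftrightarrow> \<gamma>*(1-k1) \<le> G \<and> G \<le> \<gamma>*(1+k1)"
    unfolding c_def using gk by (auto simp: abs_le_iff field_simps)
  have c2: "\<bar>c\<bar> < 1 \<longleftrightarrow> \<gamma>*(1-k1) < G \<and> G < \<gamma>*(1+k1)"
    unfolding c_def using gk by (auto simp: abs_less_iff field_simps)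
  have c3: "\<bar>c\<bar> = 1 \<longleftrightarrow> G = \<gamma>*(1-k1) \<or> G = \<gamma>*(1+k1)"
    unfolding c_def using gk by (auto simp: abs_eq_iff field_simps)
  have ex: "(\<exists>s. sin (2*\<omega>*s) = c) \<longleftrightarrow> \<bar>c\<bar> \<le> 1"
  proof
    assume "\<exists>s. sin (2*\<omega>*s) = c"
    thus "\<bar>c\<bar> \<le> 1" using abs_sin_le_one by auto
  next
    assume "\<bar>c\<bar> \<le> 1"
    hence "sin (2*\<omega>*(arcsin c / (2*\<omega>))) = c" using w by simp
    thus "\<exists>s. sin (2*\<omega>*s) = c" by blast
  qed
  show A: "fixpts \<alpha> \<beta> \<gamma> k1 \<omega> T \<noteq> {} \<longleftrightarrow> \<gamma>*(1-k1) \<le> G \<and> G \<le> \<gamma>*(1+k1)"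
    unfolding F c1[symmetric] ex[symmetric] by auto
  have N: "nfix \<alpha> \<beta> \<gamma> k1 \<omega> T = card {s. 0 \<le> s \<and> s < pi/\<omega> \<and> sin (2*\<omega>*s) = c}"
  proof -
    have "{p \<in> fixpts \<alpha> \<beta> \<gamma> k1 \<omega> T. 0 \<le> fst p \<and> fst p < pi / \<omega>}
        = (\<lambda>s. (s, y0)) ` {s. 0 \<le> s \<and> s < pi/\<omega> \<and> sin (2*\<omega>*s) = c}"
      unfolding F by auto
    moreover have inj: "inj_on (\<lambda>s. (s, y0)) {s. 0 \<le> s \<and> s < pi/\<omega> \<and> sin (2*\<omega>*s) = c}"
      by (auto simp: inj_on_def)
    ultimately show ?thesis unfolding nfix_def using card_image[OF inj] by simp
  qed
  show "\<gamma>*(1-k1) < G \<Longrightarrow> G < \<gamma>*(1+k1) \<Longrightarrow> nfix \<alpha> \<beta> \<gamma> k1 \<omega> T = 2"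
    unfolding N using sin_count_s[OF _ w, of c] c2 by auto
  show "G = \<gamma>*(1-k1) \<or> G = \<gamma>*(1+k1) \<Longrightarrow> nfix \<alpha> \<beta> \<gamma> k1 \<omega> T = 1"
    unfolding N using sin_count_s[OF _ w, of c] c3 by auto
  show "snd ` fixpts \<alpha> \<beta> \<gamma> k1 \<omega> T =
           (if \<gamma>*(1-k1) \<le> G \<and> G \<le> \<gamma>*(1+k1) then {exp (-(Kc \<alpha> \<beta> * T))} else {})"
  proof (cases "\<gamma>*(1-k1) \<le> G \<and> G \<le> \<gamma>*(1+k1)")
    case True
    then obtain s where "sin (2*\<omega>*s) = c" using ex c1 by blast
    thus ?thesis using True unfolding F y0_def by (auto simp: image_image)
  next
    case False
    thus ?thesis using A by auto
  qed
qed



theorem theorem2: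
  fixes \<alpha> \<beta> \<gamma> k1 :: real
  assumes "\<alpha> > 0" "\<beta> < 0" "\<bar>\<beta>\<bar> < \<alpha>" "\<gamma> > 0" "k1 > 0" "k1 \<noteq> 1"
  shows
   "(k1 < 1 \<and> Mc \<alpha> \<beta> < \<gamma> * (1 - k1) \<longrightarrow>
       (\<forall>\<omega>>0. \<forall>T\<ge>0. fixpts \<alpha> \<beta> \<gamma> k1 \<omega> T = {}))
  \<and> (k1 < 1 \<and> \<gamma> * (1 - k1) < Mc \<alpha> \<beta> \<and> Mc \<alpha> \<beta> < \<gamma> * (1 + k1) \<longrightarrow>
       (\<exists>T1 T2. 0 < T1 \<and> T1 < T2 \<and>
          (\<forall>\<omega>>0. \<forall>T\<ge>0.
             (fixpts \<alpha> \<beta> \<gamma> k1 \<omega> T \<noteq> {} \<longleftrightarrow> T \<in> {T1..T2}) \<and>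
             (T \<in> {T1<..<T2} \<longrightarrow> nfix \<alpha> \<beta> \<gamma> k1 \<omega> T = 2) \<and>
             (T \<in> {T1, T2} \<longrightarrow> nfix \<alpha> \<beta> \<gamma> k1 \<omega> T = 1))))
  \<and> (k1 < 1 \<and> \<gamma> * (1 + k1) < Mc \<alpha> \<beta> \<longrightarrow>
       (\<exists>T1 T2 T3 T4. 0 < T1 \<and> T1 < T2 \<and> T2 < T3 \<and> T3 < T4 \<and>
          (\<forall>\<omega>>0. \<forall>T\<ge>0.
             (fixpts \<alpha> \<beta> \<gamma> k1 \<omega> T \<noteq> {} \<longleftrightarrow> T \<in> {T1..T2} \<union> {T3..T4}) \<and>
             (T \<in> {T1<..<T2} \<union> {T3<..<T4} \<longrightarrow> nfix \<alpha> \<beta> \<gamma> k1 \<omega> T = 2) \<and>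
             (T \<in> {T1, T2, T3, T4} \<longrightarrow> nfix \<alpha> \<beta> \<gamma> k1 \<omega> T = 1))))
  \<and> (k1 > 1 \<and> Mc \<alpha> \<beta> < \<gamma> * (1 + k1) \<longrightarrow>
       (\<forall>\<omega>>0. \<forall>T>0.
          fixpts \<alpha> \<beta> \<gamma> k1 \<omega> T \<noteq> {} \<and> nfix \<alpha> \<beta> \<gamma> k1 \<omega> T = 2))
  \<and> (k1 > 1 \<and> \<gamma> * (1 + k1) < Mc \<alpha> \<beta> \<longrightarrow>
       (\<exists>T1 T2. 0 < T1 \<and> T1 < T2 \<and>
          (\<forall>\<omega>>0. \<forall>T>0.
             (fixpts \<alpha> \<beta> \<gamma> k1 \<omega> T \<noteq> {} \<longleftrightarrow> T \<in> {0<..T1} \<union> {T2..}) \<and>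
             (T \<in> {0<..<T1} \<union> {T2<..} \<longrightarrow> nfix \<alpha> \<beta> \<gamma> k1 \<omega> T = 2) \<and>
             (T \<in> {T1, T2} \<longrightarrow> nfix \<alpha> \<beta> \<gamma> k1 \<omega> T = 1))))
  \<and> (\<forall>\<omega>>0. \<forall>\<omega>'>0. \<forall>T\<ge>0.
       snd ` fixpts \<alpha> \<beta> \<gamma> k1 \<omega> T = snd ` fixpts \<alpha> \<beta> \<gamma> k1 \<omega>' T)"
proof -
  note a = assms
  have ab: "\<alpha> + \<beta> > 0" using a by linarith
  have K: "Kc \<alpha> \<beta> > 0" unfolding Kc_def using a ab by simp
  have q: "(\<alpha> - \<beta>) / (\<alpha> + \<beta>) > 1" using ab a by simp
  have d: "delta \<alpha> \<beta> > 1" unfolding delta_def using one_less_power[OF q, of 2] by simp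
  define G where "G = gg (Kc \<alpha> \<beta>) (delta \<alpha> \<beta>)"
  define Ts where "Ts = ln (delta \<alpha> \<beta>) / ((delta \<alpha> \<beta> - 1) * Kc \<alpha> \<beta>)"
  define lo where "lo = \<gamma> * (1 - k1)"
  define hi where "hi = \<gamma> * (1 + k1)"
  note gp = gg_props[OF K d, folded G_def Ts_def]
  have M: "Mc \<alpha> \<beta> = G Ts" using gp(8) unfolding Mc_def by simp
  have GM: "G T \<le> Mc \<alpha> \<beta>" for T using gp(9) M by simp
  have lohi: "lo < hi" unfolding lo_def hi_def using a by simp
  have LV: "0 < L \<Longrightarrow> L < Mc \<alpha> \<beta> \<Longrightarrow> \<exists>a b. 0 < a \<and> a < Ts \<and> Ts < b \<and>
     (\<forall>T\<ge>0. (L \<le> G T \<longleftrightarrow> a \<le> T \<and> T \<le> b) \<and> (L < G T \<longleftrightarrow> a < T \<and> T < b))" for L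
    using level[OF gp(1-6), of L] M by simp
  have FE: "\<omega> > 0 \<Longrightarrow> fixpts \<alpha> \<beta> \<gamma> k1 \<omega> T \<noteq> {} \<longleftrightarrow> lo \<le> G T \<and> G T \<le> hi" for \<omega> T
    using fix_facts(1)[OF K a(4,5), of \<omega> T] unfolding G_def lo_def hi_def by simp
  have F2: "\<omega> > 0 \<Longrightarrow> lo < G T \<Longrightarrow> G T < hi \<Longrightarrow> nfix \<alpha> \<beta> \<gamma> k1 \<omega> T = 2" for \<omega> T
    using fix_facts(2)[OF K a(4,5), of \<omega> T] unfolding G_def lo_def hi_def by simp
  have F1: "\<omega> > 0 \<Longrightarrow> G T = lo \<or> G T = hi \<Longrightarrow> nfix \<alpha> \<beta> \<gamma> k1 \<omega> T = 1" for \<omega> T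
    using fix_facts(3)[OF K a(4,5), of \<omega> T] unfolding G_def lo_def hi_def by simp
  have FS: "\<omega> > 0 \<Longrightarrow> snd ` fixpts \<alpha> \<beta> \<gamma> k1 \<omega> T =
           (if lo \<le> G T \<and> G T \<le> hi then {exp (-(Kc \<alpha> \<beta> * T))} else {})" for \<omega> T
    using fix_facts(4)[OF K a(4,5), of \<omega> T] unfolding G_def lo_def hi_def by simp
  have P1: "k1 < 1 \<and> Mc \<alpha> \<beta> < lo \<longrightarrow> (\<forall>\<omega>>0. \<forall>T\<ge>0. fixpts \<alpha> \<beta> \<gamma> k1 \<omega> T = {})"
    using FE GM by (meson less_le_trans not_le)
  have P2: "k1 < 1 \<and> lo < Mc \<alpha> \<beta> \<and> Mc \<alpha> \<beta> < hi \<longrightarrow>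
       (\<exists>T1 T2. 0 < T1 \<and> T1 < T2 \<and>
          (\<forall>\<omega>>0. \<forall>T\<ge>0.
             (fixpts \<alpha> \<beta> \<gamma> k1 \<omega> T \<noteq> {} \<longleftrightarrow> T \<in> {T1..T2}) \<and>
             (T \<in> {T1<..<T2} \<longrightarrow> nfix \<alpha> \<beta> \<gamma> k1 \<omega> T = 2) \<and>
             (T \<in> {T1, T2} \<longrightarrow> nfix \<alpha> \<beta> \<gamma> k1 \<omega> T = 1)))"
  proof
    assume h: "k1 < 1 \<and> lo < Mc \<alpha> \<beta> \<and> Mc \<alpha> \<beta> < hi"
    have "0 < lo" unfolding lo_def using h a by simp
    then obtain x y where xy: "0 < x" "x < Ts" "Ts < y"
      "\<And>T. T \<ge> 0 \<Longrightarrow> (lo \<le> G T \<longleftrightarrow> x \<le> T \<and> T \<le> y) \<and> (lo < G T \<longleftrightarrow> x < T \<and> T < y)"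
      using LV[of lo] h by blast
    have Ghi: "G T < hi" for T using GM[of T] h by simp
    show "\<exists>T1 T2. 0 < T1 \<and> T1 < T2 \<and>
          (\<forall>\<omega>>0. \<forall>T\<ge>0.
             (fixpts \<alpha> \<beta> \<gamma> k1 \<omega> T \<noteq> {} \<longleftrightarrow> T \<in> {T1..T2}) \<and>
             (T \<in> {T1<..<T2} \<longrightarrow> nfix \<alpha> \<beta> \<gamma> k1 \<omega> T = 2) \<and>
             (T \<in> {T1, T2} \<longrightarrow> nfix \<alpha> \<beta> \<gamma> k1 \<omega> T = 1))"
    proof (rule exI[of _ x], rule exI[of _ y], intro conjI allI impI)
      show "0 < x" "x < y" using xy by auto
      fix \<omega> T :: real assume w: "\<omega> > 0" and T: "T \<ge> 0"
      note xyT = xy(4)[OF T]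
      show "fixpts \<alpha> \<beta> \<gamma> k1 \<omega> T \<noteq> {} \<longleftrightarrow> T \<in> {x..y}"
        using FE[OF w, of T] xyT Ghi[of T] by auto
      show "nfix \<alpha> \<beta> \<gamma> k1 \<omega> T = 2" if "T \<in> {x<..<y}"
        using F2[OF w, of T] xyT Ghi[of T] that by auto
      show "nfix \<alpha> \<beta> \<gamma> k1 \<omega> T = 1" if "T \<in> {x, y}"
        using F1[OF w, of T] xyT xy that by auto
    qed
  qed
  have P3: "k1 < 1 \<and> hi < Mc \<alpha> \<beta> \<longrightarrow>
       (\<exists>T1 T2 T3 T4. 0 < T1 \<and> T1 < T2 \<and> T2 < T3 \<and> T3 < T4 \<and>
          (\<forall>\<omega>>0. \<forall>T\<ge>0.
             (fixpts \<alpha> \<beta> \<gamma> k1 \<omega> T \<noteq> {} \<longleftrightarrow> T \<in> {T1..T2} \<union> {T3..T4}) \<and>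
             (T \<in> {T1<..<T2} \<union> {T3<..<T4} \<longrightarrow> nfix \<alpha> \<beta> \<gamma> k1 \<omega> T = 2) \<and>
             (T \<in> {T1, T2, T3, T4} \<longrightarrow> nfix \<alpha> \<beta> \<gamma> k1 \<omega> T = 1)))"
  proof
    assume h: "k1 < 1 \<and> hi < Mc \<alpha> \<beta>"
    have "0 < lo" unfolding lo_def using h a by simp
    then obtain x1 y1 where xy1: "0 < x1" "x1 < Ts" "Ts < y1"
      "\<And>T. T \<ge> 0 \<Longrightarrow> (lo \<le> G T \<longleftrightarrow> x1 \<le> T \<and> T \<le> y1) \<and> (lo < G T \<longleftrightarrow> x1 < T \<and> T < y1)"
      using LV[of lo] h lohi by auto
    have "0 < hi" using \<open>0 < lo\<close> lohi by simp
    then obtain x2 y2 where xy2: "0 < x2" "x2 < Ts" "Ts < y2"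
      "\<And>T. T \<ge> 0 \<Longrightarrow> (hi \<le> G T \<longleftrightarrow> x2 \<le> T \<and> T \<le> y2) \<and> (hi < G T \<longleftrightarrow> x2 < T \<and> T < y2)"
      using LV[of hi] h by blast
    have "hi \<le> G x2" "hi \<le> G y2" using xy2(4)[of x2] xy2(4)[of y2] xy2 by auto
    hence "lo < G x2" "lo < G y2" using lohi by auto
    hence o: "x1 < x2" "y2 < y1" using xy1(4)[of x2] xy1(4)[of y2] xy2 by auto
    show "\<exists>T1 T2 T3 T4. 0 < T1 \<and> T1 < T2 \<and> T2 < T3 \<and> T3 < T4 \<and>
          (\<forall>\<omega>>0. \<forall>T\<ge>0.
             (fixpts \<alpha> \<beta> \<gamma> k1 \<omega> T \<noteq> {} \<longleftrightarrow> T \<in> {T1..T2} \<union> {T3..T4}) \<and>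
             (T \<in> {T1<..<T2} \<union> {T3<..<T4} \<longrightarrow> nfix \<alpha> \<beta> \<gamma> k1 \<omega> T = 2) \<and>
             (T \<in> {T1, T2, T3, T4} \<longrightarrow> nfix \<alpha> \<beta> \<gamma> k1 \<omega> T = 1))"
    proof (rule exI[of _ x1], rule exI[of _ x2], rule exI[of _ y2], rule exI[of _ y1], intro conjI allI impI)
      show "0 < x1" "x1 < x2" "x2 < y2" "y2 < y1" using xy1 xy2 o by auto
      fix \<omega> T :: real assume w: "\<omega> > 0" and T: "T \<ge> 0"
      note A1 = xy1(4)[OF T] and A2 = xy2(4)[OF T]
      show "fixpts \<alpha> \<beta> \<gamma> k1 \<omega> T \<noteq> {} \<longleftrightarrow> T \<in> {x1..x2} \<union> {y2..y1}"
        using FE[OF w, of T] A1 A2 o xy1 xy2 by auto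
      show "nfix \<alpha> \<beta> \<gamma> k1 \<omega> T = 2" if "T \<in> {x1<..<x2} \<union> {y2<..<y1}"
        using F2[OF w, of T] A1 A2 o xy1 xy2 that by auto
      show "nfix \<alpha> \<beta> \<gamma> k1 \<omega> T = 1" if "T \<in> {x1, x2, y2, y1}"
        using F1[OF w, of T] A1 A2 o xy1 xy2 that by auto
    qed
  qed
  have P4: "k1 > 1 \<and> Mc \<alpha> \<beta> < hi \<longrightarrow>
       (\<forall>\<omega>>0. \<forall>T>0. fixpts \<alpha> \<beta> \<gamma> k1 \<omega> T \<noteq> {} \<and> nfix \<alpha> \<beta> \<gamma> k1 \<omega> T = 2)"
  proof (intro impI allI)
    fix \<omega> T :: real assume h: "k1 > 1 \<and> Mc \<alpha> \<beta> < hi" and w: "\<omega> > 0" and T: "T > 0"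
    have "lo < 0" unfolding lo_def using h a by (simp add: mult_pos_neg)
    moreover have "G T > 0" using gp(7)[OF T] .
    moreover have "G T < hi" using GM[of T] h by simp
    ultimately show "fixpts \<alpha> \<beta> \<gamma> k1 \<omega> T \<noteq> {} \<and> nfix \<alpha> \<beta> \<gamma> k1 \<omega> T = 2"
      using FE[OF w, of T] F2[OF w, of T] by auto
  qed
  have P5: "k1 > 1 \<and> hi < Mc \<alpha> \<beta> \<longrightarrow>
       (\<exists>T1 T2. 0 < T1 \<and> T1 < T2 \<and>
          (\<forall>\<omega>>0. \<forall>T>0.
             (fixpts \<alpha> \<beta> \<gamma> k1 \<omega> T \<noteq> {} \<longleftrightarrow> T \<in> {0<..T1} \<union> {T2..}) \<and>
             (T \<in> {0<..<T1} \<union> {T2<..} \<longrightarrow> nfix \<alpha> \<beta> \<gamma> k1 \<omega> T = 2) \<and>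
             (T \<in> {T1, T2} \<longrightarrow> nfix \<alpha> \<beta> \<gamma> k1 \<omega> T = 1)))"
  proof
    assume h: "k1 > 1 \<and> hi < Mc \<alpha> \<beta>"
    have lo0: "lo < 0" unfolding lo_def using h a by (simp add: mult_pos_neg)
    have "0 < hi" unfolding hi_def using a by simp
    then obtain x y where xy: "0 < x" "x < Ts" "Ts < y"
      "\<And>T. T \<ge> 0 \<Longrightarrow> (hi \<le> G T \<longleftrightarrow> x \<le> T \<and> T \<le> y) \<and> (hi < G T \<longleftrightarrow> x < T \<and> T < y)"
      using LV[of hi] h by blast
    show "\<exists>T1 T2. 0 < T1 \<and> T1 < T2 \<and>
          (\<forall>\<omega>>0. \<forall>T>0.
             (fixpts \<alpha> \<beta> \<gamma> k1 \<omega> T \<noteq> {} \<longleftrightarrow> T \<in> {0<..T1} \<union> {T2..}) \<and>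
             (T \<in> {0<..<T1} \<union> {T2<..} \<longrightarrow> nfix \<alpha> \<beta> \<gamma> k1 \<omega> T = 2) \<and>
             (T \<in> {T1, T2} \<longrightarrow> nfix \<alpha> \<beta> \<gamma> k1 \<omega> T = 1))"
    proof (rule exI[of _ x], rule exI[of _ y], intro conjI allI impI)
      show "0 < x" "x < y" using xy by auto
      fix \<omega> T :: real assume w: "\<omega> > 0" and T: "T > 0"
      note xyT = xy(4)[OF less_imp_le[OF T]]
      have Gp: "G T > 0" using gp(7)[OF T] .
      have e1: "hi < G T \<longleftrightarrow> x < T \<and> T < y" using xy(4)[of T] T by auto
      show "fixpts \<alpha> \<beta> \<gamma> k1 \<omega> T \<noteq> {} \<longleftrightarrow> T \<in> {0<..x} \<union> {y..}"
      proof -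
        have "fixpts \<alpha> \<beta> \<gamma> k1 \<omega> T \<noteq> {} \<longleftrightarrow> \<not> (hi < G T)" using FE[OF w, of T] Gp lo0 by auto
        also have "\<dots> \<longleftrightarrow> T \<in> {0<..x} \<union> {y..}" using e1 T by auto
        finally show ?thesis .
      qed
      show "nfix \<alpha> \<beta> \<gamma> k1 \<omega> T = 2" if "T \<in> {0<..<x} \<union> {y<..}"
        using F2[OF w, of T] xyT Gp lo0 that xy by auto
      show "nfix \<alpha> \<beta> \<gamma> k1 \<omega> T = 1" if "T \<in> {x, y}"
        using F1[OF w, of T] xyT xy that by auto
    qed
  qed
  have P6: "\<forall>\<omega>>0. \<forall>\<omega>'>0. \<forall>T\<ge>0.
       snd ` fixpts \<alpha> \<beta> \<gamma> k1 \<omega> T = snd ` fixpts \<alpha> \<beta> \<gamma> k1 \<omega>' T"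
    using FS by simp
  show ?thesis using P1 P2 P3 P4 P5 P6 unfolding lo_def hi_def by blast
qed

end
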